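(* Let $c>0$, $f_s>0$, let $M,N,K\ge1$ be integers, $T_{\max}=(N-1)/f_s$, $\bm{r}^{\mathrm{mic}}_1,\dots,\bm{r}^{\mathrm{mic}}_M\in\mathbb{R}^3$ with $E_M=\{\bm{r}^{\mathrm{mic}}_m\}$, $\bm{x}=(x_{m,n})\in\mathbb{R}^{MN}$. Let $\kappa$ be continuous with $\kappa(0)>0$ and $\lim_{|t|\to\infty}\kappa(t)=0$, and assume $\Gamma^K$ is amplitude lower-bounded. Then there exist an integer $K'\in\{0,\dots,K\}$, a pair $(\bm{a},\bm{r})\in\mathbb{R}_+^{K'}\times(\mathbb{R}^3\setminus E_M)^{K'}$ and $\widetilde{\bm{a}}\in\mathbb{R}_+^M$ such that, up to a permutation of the indices, $$\inf_{(\bm{a}',\bm{r}')\in\mathbb{R}_+^K\times\mathscr{C}^K}T(\bm{a}',\bm{r}')=\widetilde T(\bm{a},\bm{r},\widetilde{\bm{a}}):=\frac12\sum_{m=1}^M\sum_{n=0}^{N-1}\Big(x_{m,n}-\sum_{k=1}^{K'}a_k\gamma_{m,n}(\bm{r}_k)-\widetilde a_m\kappa(n/f_s)\Big)^2.$$ Moreover, there exists a minimizing sequence $(\bm{a}^l,\bm{r}^l)$ for this infimum such that $(a^l_k,\bm{r}^l_k)\to(a_k,\bm{r}_k)$ for all $k\in\{1,\dots,K'\}$ and $a^l_k\to0$ for $k\in\{K'+1,\dots,K\}$.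
   Context: $\mathbb{R}_+=[0,+\infty)$, $\|\cdot\|_2$ Euclidean norm. $T(\bm{a},\bm{r})=\frac12\|\bm{x}-\sum_{k=1}^K a_k\gamma(\bm{r}_k)\|_2^2$. For $\bm{r}\in\mathbb{R}^3\setminus E_M$, $\gamma_{m,n}(\bm{r})=\dfrac{\kappa\big(n/f_s-\|\bm{r}-\bm{r}^{\mathrm{mic}}_m\|_2/c\big)}{4\pi\|\bm{r}-\bm{r}^{\mathrm{mic}}_m\|_2}$, $1\le m\le M$, $0\le n\le N-1$. $\mathscr{C}=\bigcap_{m=1}^M\overline{B(\bm{r}^{\mathrm{mic}}_m,cT_{\max})}\setminus E_M$. $\Gamma^K(\bm{a},\bm{r})=\sum_k a_k\gamma(\bm{r}_k)$; it is amplitude lower-bounded if there is $C>0$ with $\|\Gamma^K(\bm{a},\bm{r})\|_2\ge C\sum_k a_k$ for all $(\bm{a},\bm{r})\in\mathbb{R}_+^K\times\mathscr{C}^K$. *)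

theory Defs
  imports "HOL-Analysis.Analysis"
begin

text \<open>Microphone positions: rmic :: nat => real^3, indices m in {1..M};
  time samples n in {0..<N}; sources k in {1..K}.\<close>

definition Tmax :: "real \<Rightarrow> nat \<Rightarrow> real" where
  "Tmax fs N = (real N - 1) / fs"

definition EM :: "nat \<Rightarrow> (nat \<Rightarrow> real^3) \<Rightarrow> (real^3) set" where
  "EM M rmic = rmic ` {1..M}"

definition gamma :: "real \<Rightarrow> real \<Rightarrow> (real \<Rightarrow> real) \<Rightarrow> (nat \<Rightarrow> real^3) \<Rightarrow> nat \<Rightarrow> nat \<Rightarrow> real^3 \<Rightarrow> real" where
  "gamma c fs \<kappa> rmic m n r =
     \<kappa> (real n / fs - norm (r - rmic m) / c) / (4 * pi * norm (r - rmic m))"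

definition Cset :: "real \<Rightarrow> real \<Rightarrow> nat \<Rightarrow> nat \<Rightarrow> (nat \<Rightarrow> real^3) \<Rightarrow> (real^3) set" where
  "Cset c fs M N rmic = (\<Inter>m\<in>{1..M}. cball (rmic m) (c * Tmax fs N)) - EM M rmic"

definition GammaK :: "real \<Rightarrow> real \<Rightarrow> (real \<Rightarrow> real) \<Rightarrow> (nat \<Rightarrow> real^3) \<Rightarrow> nat
    \<Rightarrow> (nat \<Rightarrow> real) \<Rightarrow> (nat \<Rightarrow> real^3) \<Rightarrow> nat \<Rightarrow> nat \<Rightarrow> real" where
  "GammaK c fs \<kappa> rmic K a r m n = (\<Sum>k=1..K. a k * gamma c fs \<kappa> rmic m n (r k))"

definition norm2MN :: "nat \<Rightarrow> nat \<Rightarrow> (nat \<Rightarrow> nat \<Rightarrow> real) \<Rightarrow> real" where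
  "norm2MN M N v = sqrt (\<Sum>m=1..M. \<Sum>n=0..<N. (v m n)\<^sup>2)"

definition Tfun :: "real \<Rightarrow> real \<Rightarrow> (real \<Rightarrow> real) \<Rightarrow> (nat \<Rightarrow> real^3) \<Rightarrow> nat \<Rightarrow> nat
    \<Rightarrow> (nat \<Rightarrow> nat \<Rightarrow> real) \<Rightarrow> nat \<Rightarrow> (nat \<Rightarrow> real) \<Rightarrow> (nat \<Rightarrow> real^3) \<Rightarrow> real" where
  "Tfun c fs \<kappa> rmic M N x K a r =
     (norm2MN M N (\<lambda>m n. x m n - GammaK c fs \<kappa> rmic K a r m n))\<^sup>2 / 2"

definition Ttilde :: "real \<Rightarrow> real \<Rightarrow> (real \<Rightarrow> real) \<Rightarrow> (nat \<Rightarrow> real^3) \<Rightarrow> nat \<Rightarrow> nat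
    \<Rightarrow> (nat \<Rightarrow> nat \<Rightarrow> real) \<Rightarrow> nat \<Rightarrow> (nat \<Rightarrow> real) \<Rightarrow> (nat \<Rightarrow> real^3) \<Rightarrow> (nat \<Rightarrow> real) \<Rightarrow> real" where
  "Ttilde c fs \<kappa> rmic M N x K' a r atl =
     (1/2) * (\<Sum>m=1..M. \<Sum>n=0..<N.
        (x m n - (\<Sum>k=1..K'. a k * gamma c fs \<kappa> rmic m n (r k)) - atl m * \<kappa> (real n / fs))\<^sup>2)"

definition amplitude_lower_bounded :: "real \<Rightarrow> real \<Rightarrow> (real \<Rightarrow> real) \<Rightarrow> (nat \<Rightarrow> real^3)
    \<Rightarrow> nat \<Rightarrow> nat \<Rightarrow> nat \<Rightarrow> bool" where
  "amplitude_lower_bounded c fs \<kappa> rmic M N K \<longleftrightarrow>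
     (\<exists>C>0. \<forall>a r. (\<forall>k\<in>{1..K}. 0 \<le> a k \<and> r k \<in> Cset c fs M N rmic) \<longrightarrow>
        norm2MN M N (GammaK c fs \<kappa> rmic K a r) \<ge> C * (\<Sum>k=1..K. a k))"

definition admissible :: "real \<Rightarrow> real \<Rightarrow> nat \<Rightarrow> nat \<Rightarrow> (nat \<Rightarrow> real^3) \<Rightarrow> nat
    \<Rightarrow> (nat \<Rightarrow> real) \<Rightarrow> (nat \<Rightarrow> real^3) \<Rightarrow> bool" where
  "admissible c fs M N rmic K a r \<longleftrightarrow> (\<forall>k\<in>{1..K}. 0 \<le> a k \<and> r k \<in> Cset c fs M N rmic)"

definition infT :: "real \<Rightarrow> real \<Rightarrow> (real \<Rightarrow> real) \<Rightarrow> (nat \<Rightarrow> real^3) \<Rightarrow> nat \<Rightarrow> nat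
    \<Rightarrow> (nat \<Rightarrow> nat \<Rightarrow> real) \<Rightarrow> nat \<Rightarrow> real" where
  "infT c fs \<kappa> rmic M N x K =
     Inf {Tfun c fs \<kappa> rmic M N x K a r | a r. admissible c fs M N rmic K a r}"

end

theory Submission
  imports Defs
begin


lemma norm2MN_L2: "norm2MN M N v = L2_set (\<lambda>(m,n). v m n) ({1..M} \<times> {0..<N})"
  unfolding norm2MN_def L2_set_def by (simp add: sum.cartesian_product case_prod_beta)

lemma norm2MN_triangle:
  "norm2MN M N (\<lambda>m n. u m n + v m n) \<le> norm2MN M N u + norm2MN M N v"
proof -
  have e: "(\<lambda>(m,n). u m n + v m n) = (\<lambda>i. (case i of (m,n) \<Rightarrow> u m n) + (case i of (m,n) \<Rightarrow> v m n))"
    by (auto simp: fun_eq_iff)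
  show ?thesis unfolding norm2MN_L2 e by (rule L2_set_triangle_ineq)
qed

lemma norm2MN_sym: "norm2MN M N (\<lambda>m n. u m n - v m n) = norm2MN M N (\<lambda>m n. v m n - u m n)"
  unfolding norm2MN_def by (simp add: power2_commute)

lemma norm2MN_sq: "(norm2MN M N v)\<^sup>2 = (\<Sum>m=1..M. \<Sum>n=0..<N. (v m n)\<^sup>2)"
  unfolding norm2MN_def by (simp add: sum_nonneg)

lemma Tfun_eq: "Tfun c fs \<kappa> rmic M N x K a r =
   (1/2) * (\<Sum>m=1..M. \<Sum>n=0..<N. (x m n - GammaK c fs \<kappa> rmic K a r m n)\<^sup>2)"
  unfolding Tfun_def norm2MN_sq by simp

lemma Tfun_nonneg: "0 \<le> Tfun c fs \<kappa> rmic M N x K a r"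
  unfolding Tfun_def by simp

lemma multi_subseq:
  fixes f :: "nat \<Rightarrow> 'i \<Rightarrow> 'a::{heine_borel,real_normed_vector}"
  assumes "finite I" and "\<And>i. i \<in> I \<Longrightarrow> \<exists>B. \<forall>\<^sub>F l in sequentially. norm (f l i) \<le> B"
  shows "\<exists>\<sigma> L. strict_mono \<sigma> \<and> (\<forall>i\<in>I. (\<lambda>l. f (\<sigma> l) i) \<longlonglongrightarrow> L i)"
  using assms
proof (induction I rule: finite_induct)
  case empty
  show ?case by (rule exI[of _ id]) (auto simp: strict_mono_def)
next
  case (insert i I)
  then obtain \<sigma> L where s: "strict_mono \<sigma>" and L: "\<forall>j\<in>I. (\<lambda>l. f (\<sigma> l) j) \<longlonglongrightarrow> L j"
    by blast
  obtain B where "\<forall>\<^sub>F l in sequentially. norm (f l i) \<le> B" using insert.prems by blast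
  then have "\<forall>\<^sub>F l in sequentially. norm (f (\<sigma> l) i) \<le> B"
    using eventually_compose_filterlim[OF _ filterlim_subseq[OF s]] by blast
  then obtain N0 where N0: "\<And>l. l \<ge> N0 \<Longrightarrow> norm (f (\<sigma> l) i) \<le> B"
    by (auto simp: eventually_sequentially)
  have "bounded (range (\<lambda>l. f (\<sigma> (l + N0)) i))"
    unfolding bounded_iff by (intro exI[of _ B]) (auto intro: N0)
  then obtain l0 \<tau> where t: "strict_mono \<tau>" and lt: "((\<lambda>l. f (\<sigma> (l + N0)) i) \<circ> \<tau>) \<longlonglongrightarrow> l0"
    using bounded_imp_convergent_subsequence by blast
  have sm2: "strict_mono (\<lambda>l. \<tau> l + N0)" using t by (simp add: strict_mono_def)
  show ?case
  proof (intro exI conjI ballI)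
    show "strict_mono (\<lambda>l. \<sigma> (\<tau> l + N0))" using s sm2 strict_mono_o[OF s sm2] by (simp add: o_def)
    fix j assume j: "j \<in> insert i I"
    show "(\<lambda>l. f (\<sigma> (\<tau> l + N0)) j) \<longlonglongrightarrow> (L(i := l0)) j"
    proof (cases "j = i")
      case True then show ?thesis using lt by (simp add: o_def)
    next
      case False
      then have "j \<in> I" using j by auto
      then have "(\<lambda>l. f (\<sigma> l) j) \<longlonglongrightarrow> L j" using L by blast
      from LIMSEQ_subseq_LIMSEQ[OF this sm2] show ?thesis using False by (simp add: o_def)
    qed
  qed
qed

lemma gamma_tendsto:
  assumes kc: "\<And>t. isCont \<kappa> t" and lim: "(\<rho> \<longlongrightarrow> r) F" and ne: "r \<noteq> rmic m" and c0: "c \<noteq> 0"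
  shows "((\<lambda>l. gamma c fs \<kappa> rmic m n (\<rho> l)) \<longlongrightarrow> gamma c fs \<kappa> rmic m n r) F"
proof -
  have d: "((\<lambda>l. norm (\<rho> l - rmic m)) \<longlongrightarrow> norm (r - rmic m)) F"
    by (intro tendsto_intros lim)
  have k: "((\<lambda>l. \<kappa> (real n / fs - norm (\<rho> l - rmic m) / c)) \<longlongrightarrow> \<kappa> (real n / fs - norm (r - rmic m) / c)) F"
    by (rule isCont_tendsto_compose[OF kc]) (intro tendsto_intros lim c0)
  show ?thesis unfolding gamma_def
    by (intro tendsto_divide k tendsto_mult tendsto_const d) (use ne c0 in auto)
qed




theorem lemma2:
  fixes c fs :: real and M N K :: nat
    and rmic :: "nat \<Rightarrow> real^3" and x :: "nat \<Rightarrow> nat \<Rightarrow> real"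
    and \<kappa> :: "real \<Rightarrow> real"
  assumes "c > 0" and "fs > 0" and "M \<ge> 1" and "N \<ge> 1" and "K \<ge> 1"
    and "continuous_on UNIV \<kappa>" and "\<kappa> 0 > 0" and "(\<kappa> \<longlongrightarrow> 0) at_infinity"
    and "Cset c fs M N rmic \<noteq> {}"
    and "amplitude_lower_bounded c fs \<kappa> rmic M N K"
  shows "\<exists>K'\<le>K. \<exists>a r atl.
     (\<forall>k\<in>{1..K'}. 0 \<le> a k \<and> r k \<notin> EM M rmic) \<and> (\<forall>m\<in>{1..M}. 0 \<le> atl m) \<and>
     infT c fs \<kappa> rmic M N x K = Ttilde c fs \<kappa> rmic M N x K' a r atl \<and>
     (\<exists>al rl. (\<forall>l. admissible c fs M N rmic K (al l) (rl l)) \<and>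
        (\<lambda>l. Tfun c fs \<kappa> rmic M N x K (al l) (rl l)) \<longlonglongrightarrow> infT c fs \<kappa> rmic M N x K \<and>
        (\<forall>k\<in>{1..K'}. (\<lambda>l. al l k) \<longlonglongrightarrow> a k \<and> (\<lambda>l. rl l k) \<longlonglongrightarrow> r k) \<and>
        (\<forall>k\<in>{K'+1..K}. (\<lambda>l. al l k) \<longlonglongrightarrow> 0))"
proof -
  note c0 = assms(1) and M1 = assms(3) and N1 = assms(4) and kap0 = assms(7)
  have kc: "\<And>t. isCont \<kappa> t" using assms(6) by (simp add: continuous_on_eq_continuous_at)
  have cne: "c \<noteq> 0" using c0 by simp
  define S where "S = {1..K}"
  define Cs where "Cs = Cset c fs M N rmic"
  define I where "I = infT c fs \<kappa> rmic M N x K"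
  define Tf where "Tf = Tfun c fs \<kappa> rmic M N x K"
  define Adm where "Adm = admissible c fs M N rmic K"
  define g where "g = gamma c fs \<kappa> rmic"
  define Gm where "Gm = GammaK c fs \<kappa> rmic K"
  have finS: "finite S" by (simp add: S_def)
  have Gm_eq: "\<And>a r m n. Gm a r m n = (\<Sum>k\<in>S. a k * g m n (r k))"
    by (simp add: Gm_def GammaK_def S_def g_def)
  have Tf_eq: "\<And>a r. Tf a r = (1/2) * (\<Sum>m=1..M. \<Sum>n=0..<N. (x m n - Gm a r m n)\<^sup>2)"
    by (simp add: Tf_def Gm_def Tfun_eq)
  have Adm_iff: "\<And>a r. Adm a r \<longleftrightarrow> (\<forall>k\<in>S. 0 \<le> a k \<and> r k \<in> Cs)"
    by (simp add: Adm_def admissible_def S_def Cs_def)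
  have Cs_EM: "\<And>y. y \<in> Cs \<Longrightarrow> y \<notin> EM M rmic" by (simp add: Cs_def Cset_def)
  define Sset where "Sset = {Tf a r | a r. Adm a r}"
  obtain p where p: "p \<in> Cs" using assms(9) Cs_def by blast
  have ne: "Sset \<noteq> {}"
  proof -
    have "Adm (\<lambda>_. 0) (\<lambda>_. p)" using p by (simp add: Adm_iff)
    then show ?thesis by (auto simp: Sset_def)
  qed
  have bdd: "bdd_below Sset"
    unfolding bdd_below_def Sset_def Tf_def using Tfun_nonneg by blast
  have I_eq: "I = Inf Sset" by (simp add: I_def infT_def Sset_def Tf_def Adm_def)
  have lowI: "\<And>a r. Adm a r \<Longrightarrow> I \<le> Tf a r"
    unfolding I_eq by (rule cInf_lower[OF _ bdd]) (auto simp: Sset_def)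
  have "\<forall>l. \<exists>a r. Adm a r \<and> Tf a r < I + inverse (real (Suc l))"
  proof
    fix l
    have "Inf Sset < I + inverse (real (Suc l))" using I_eq by simp
    from cInf_lessD[OF ne this] show "\<exists>a r. Adm a r \<and> Tf a r < I + inverse (real (Suc l))"
      by (auto simp: Sset_def)
  qed
  then obtain a0 r0 where a0r0: "\<And>l. Adm (a0 l) (r0 l)" "\<And>l. Tf (a0 l) (r0 l) < I + inverse (real (Suc l))"
    by metis
  have T0lim: "(\<lambda>l. Tf (a0 l) (r0 l)) \<longlonglongrightarrow> I"
  proof (rule tendsto_sandwich[of "\<lambda>_. I" _ _ "\<lambda>l. I + inverse (real (Suc l))"])
    show "\<forall>\<^sub>F l in sequentially. I \<le> Tf (a0 l) (r0 l)" using lowI a0r0 by auto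
    show "\<forall>\<^sub>F l in sequentially. Tf (a0 l) (r0 l) \<le> I + inverse (real (Suc l))"
      by (intro always_eventually allI less_imp_le a0r0(2))
    show "(\<lambda>l. I + inverse (real (Suc l))) \<longlonglongrightarrow> I"
      using tendsto_add[OF tendsto_const LIMSEQ_inverse_real_of_nat, of I] by simp
  qed simp
  have T0le: "\<And>l. Tf (a0 l) (r0 l) \<le> I + 1"
  proof -
    fix l
    have "inverse (real (Suc l)) \<le> 1" by (simp add: field_simps)
    then show "Tf (a0 l) (r0 l) \<le> I + 1" using a0r0(2)[of l] by linarith
  qed
  obtain C where C: "C > 0" "\<And>a r. Adm a r \<Longrightarrow> norm2MN M N (Gm a r) \<ge> C * (\<Sum>k\<in>S. a k)"
    using assms(10) unfolding amplitude_lower_bounded_def Adm_iff S_def Cs_def Gm_def by blast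
  have Gm_norm: "\<And>a r. norm2MN M N (Gm a r) \<le> norm2MN M N x + sqrt (2 * Tf a r)"
  proof -
    fix a r
    have "norm2MN M N (Gm a r) = norm2MN M N (\<lambda>m n. x m n + (Gm a r m n - x m n))" by simp
    also have "\<dots> \<le> norm2MN M N x + norm2MN M N (\<lambda>m n. Gm a r m n - x m n)"
      by (rule norm2MN_triangle)
    also have "norm2MN M N (\<lambda>m n. Gm a r m n - x m n) = norm2MN M N (\<lambda>m n. x m n - Gm a r m n)"
      by (rule norm2MN_sym)
    also have "\<dots> = sqrt (2 * Tf a r)"
      by (simp add: Tf_def Tfun_def Gm_def norm2MN_def sum_nonneg)
    finally show "norm2MN M N (Gm a r) \<le> norm2MN M N x + sqrt (2 * Tf a r)" .
  qed
  define Ab where "Ab = (norm2MN M N x + sqrt (2 * (I + 1))) / C"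
  have a0b: "\<And>l k. k \<in> S \<Longrightarrow> 0 \<le> a0 l k \<and> a0 l k \<le> Ab"
  proof -
    fix l k assume k: "k \<in> S"
    have nn: "\<forall>k\<in>S. 0 \<le> a0 l k" using a0r0(1)[of l] by (simp add: Adm_iff)
    have "a0 l k \<le> (\<Sum>k\<in>S. a0 l k)" by (rule member_le_sum[OF k]) (use nn finS in auto)
    also have "C * (\<Sum>k\<in>S. a0 l k) \<le> norm2MN M N x + sqrt (2 * (I + 1))"
      using C(2)[OF a0r0(1)[of l]] Gm_norm[of "a0 l" "r0 l"] T0le[of l] by (smt (verit) real_sqrt_le_iff)
    then have "(\<Sum>k\<in>S. a0 l k) \<le> Ab" unfolding Ab_def using C(1) by (simp add: field_simps)
    finally show "0 \<le> a0 l k \<and> a0 l k \<le> Ab" using nn k by auto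
  qed
  have r0b: "\<And>l k. k \<in> S \<Longrightarrow> norm (r0 l k) \<le> norm (rmic 1) + c * Tmax fs N"
  proof -
    fix l k assume k: "k \<in> S"
    then have "r0 l k \<in> Cs" using a0r0(1)[of l] by (simp add: Adm_iff)
    then have "r0 l k \<in> cball (rmic 1) (c * Tmax fs N)" using M1 by (auto simp: Cs_def Cset_def)
    then show "norm (r0 l k) \<le> norm (rmic 1) + c * Tmax fs N"
      by (simp add: dist_norm) (metis norm_triangle_sub add.commute add_le_cancel_right order_trans norm_minus_commute)
  qed
  obtain \<sigma>1 as where s1: "strict_mono \<sigma>1" and as: "\<forall>k\<in>S. (\<lambda>l. a0 (\<sigma>1 l) k) \<longlonglongrightarrow> as k"
  proof -
    have "\<exists>\<sigma> L. strict_mono \<sigma> \<and> (\<forall>k\<in>S. (\<lambda>l. a0 (\<sigma> l) k) \<longlonglongrightarrow> L k)"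
    proof (rule multi_subseq[OF finS])
      fix k assume "k \<in> S"
      then show "\<exists>B. \<forall>\<^sub>F l in sequentially. norm (a0 l k) \<le> B"
        using a0b by (intro exI[of _ Ab] always_eventually) auto
    qed
    then show ?thesis using that by blast
  qed
  obtain \<sigma>2 rs where s2: "strict_mono \<sigma>2" and rs: "\<forall>k\<in>S. (\<lambda>l. r0 (\<sigma>1 (\<sigma>2 l)) k) \<longlonglongrightarrow> rs k"
  proof -
    have "\<exists>\<sigma> L. strict_mono \<sigma> \<and> (\<forall>k\<in>S. (\<lambda>l. r0 (\<sigma>1 (\<sigma> l)) k) \<longlonglongrightarrow> L k)"
    proof (rule multi_subseq[OF finS, of "\<lambda>l k. r0 (\<sigma>1 l) k"])
      fix k assume "k \<in> S"
      then show "\<exists>B. \<forall>\<^sub>F l in sequentially. norm (r0 (\<sigma>1 l) k) \<le> B"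
        using r0b by (intro exI always_eventually) auto
    qed
    then show ?thesis using that by blast
  qed
  define \<alpha> where "\<alpha> l = a0 (\<sigma>1 (\<sigma>2 l))" for l
  define \<rho> where "\<rho> l = r0 (\<sigma>1 (\<sigma>2 l))" for l
  have s12: "strict_mono (\<lambda>l. \<sigma>1 (\<sigma>2 l))" using strict_mono_o[OF s1 s2] by (simp add: o_def)
  have \<alpha>lim: "\<And>k. k \<in> S \<Longrightarrow> (\<lambda>l. \<alpha> l k) \<longlonglongrightarrow> as k"
    unfolding \<alpha>_def using LIMSEQ_subseq_LIMSEQ[OF _ s2] as by (auto simp: o_def)
  have \<rho>lim: "\<And>k. k \<in> S \<Longrightarrow> (\<lambda>l. \<rho> l k) \<longlonglongrightarrow> rs k"
    unfolding \<rho>_def using rs by auto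
  have Adm\<alpha>: "\<And>l. Adm (\<alpha> l) (\<rho> l)" by (simp add: \<alpha>_def \<rho>_def a0r0(1))
  have T\<alpha>le: "\<And>l. Tf (\<alpha> l) (\<rho> l) \<le> I + 1" by (simp add: \<alpha>_def \<rho>_def T0le)
  have T\<alpha>lim: "(\<lambda>l. Tf (\<alpha> l) (\<rho> l)) \<longlonglongrightarrow> I"
    unfolding \<alpha>_def \<rho>_def using LIMSEQ_subseq_LIMSEQ[OF T0lim s12] by (simp add: o_def)
  have \<alpha>nn: "\<And>l k. k \<in> S \<Longrightarrow> 0 \<le> \<alpha> l k" using Adm\<alpha> by (simp add: Adm_iff)
  have \<rho>Cs: "\<And>l k. k \<in> S \<Longrightarrow> \<rho> l k \<in> Cs" using Adm\<alpha> by (simp add: Adm_iff)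
  define A where "A = {k\<in>S. rs k \<in> EM M rmic}"
  define B where "B = S - A"
  define \<beta> where "\<beta> l k = \<alpha> l k / norm (\<rho> l k - rs k)" for l k
  have dpos: "\<And>l k. k \<in> A \<Longrightarrow> norm (\<rho> l k - rs k) > 0"
  proof -
    fix l k assume "k \<in> A"
    then have "rs k \<in> EM M rmic" "k \<in> S" by (auto simp: A_def)
    moreover have "\<rho> l k \<notin> EM M rmic" using Cs_EM \<rho>Cs \<open>k \<in> S\<close> by blast
    ultimately show "norm (\<rho> l k - rs k) > 0" by auto
  qed
  have \<beta>nn: "\<And>l k. k \<in> A \<Longrightarrow> 0 \<le> \<beta> l k"
    unfolding \<beta>_def using \<alpha>nn by (auto simp: A_def)
  have \<beta>bd: "\<And>k. k \<in> A \<Longrightarrow> \<exists>Bd. \<forall>\<^sub>F l in sequentially. norm (\<beta> l k) \<le> Bd"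
  proof -
    fix k0 assume k0A: "k0 \<in> A"
    then have k0S: "k0 \<in> S" by (simp add: A_def)
    obtain m0 where m0: "m0 \<in> {1..M}" "rs k0 = rmic m0" using k0A by (auto simp: A_def EM_def)
    define A0 where "A0 = {k\<in>S. rs k = rmic m0}"
    have A0A: "A0 \<subseteq> A" using m0 by (auto simp: A0_def A_def EM_def)
    have k0A0: "k0 \<in> A0" using k0S m0 by (simp add: A0_def)
    have finA0: "finite A0" using finS by (simp add: A0_def)
    define \<Gamma> where "\<Gamma> l = Gm (\<alpha> l) (\<rho> l) m0 0" for l
    define U where "U = \<bar>x m0 0\<bar> + sqrt (2 * (I + 1))"
    have \<Gamma>U: "\<And>l. \<Gamma> l \<le> U"
    proof -
      fix l
      have "(x m0 0 - \<Gamma> l)\<^sup>2 \<le> (\<Sum>n=0..<N. (x m0 n - Gm (\<alpha> l) (\<rho> l) m0 n)\<^sup>2)"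
        unfolding \<Gamma>_def by (rule member_le_sum[of 0 "{0..<N}" "\<lambda>n. (x m0 n - Gm (\<alpha> l) (\<rho> l) m0 n)\<^sup>2", simplified]) (use N1 in auto)
      also have "\<dots> \<le> (\<Sum>m=1..M. \<Sum>n=0..<N. (x m n - Gm (\<alpha> l) (\<rho> l) m n)\<^sup>2)"
        by (rule member_le_sum[of m0 "{1..M}" "\<lambda>m. \<Sum>n=0..<N. (x m n - Gm (\<alpha> l) (\<rho> l) m n)\<^sup>2"]) (use m0 in \<open>auto intro: sum_nonneg\<close>)
      also have "\<dots> = 2 * Tf (\<alpha> l) (\<rho> l)" by (simp add: Tf_eq)
      also have "\<dots> \<le> 2 * (I + 1)" using T\<alpha>le[of l] by simp
      finally have "(\<Gamma> l - x m0 0)\<^sup>2 \<le> 2 * (I + 1)" by (simp add: power2_commute)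
      then have "\<Gamma> l - x m0 0 \<le> sqrt (2 * (I + 1))" by (rule real_le_rsqrt)
      then show "\<Gamma> l \<le> U" unfolding U_def by linarith
    qed
    define L0 where "L0 = (\<Sum>k\<in>S-A0. as k * g m0 0 (rs k))"
    have "(\<lambda>l. \<Sum>k\<in>S-A0. \<alpha> l k * g m0 0 (\<rho> l k)) \<longlonglongrightarrow> L0"
      unfolding L0_def
    proof (intro tendsto_sum tendsto_mult)
      fix k assume k: "k \<in> S - A0"
      show "(\<lambda>l. \<alpha> l k) \<longlonglongrightarrow> as k" using k \<alpha>lim by auto
      show "(\<lambda>l. g m0 0 (\<rho> l k)) \<longlonglongrightarrow> g m0 0 (rs k)"
        unfolding g_def by (rule gamma_tendsto[OF kc _ _ cne]) (use k \<rho>lim in \<open>auto simp: A0_def\<close>)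
    qed
    then have ev1: "\<forall>\<^sub>F l in sequentially. L0 - 1 < (\<Sum>k\<in>S-A0. \<alpha> l k * g m0 0 (\<rho> l k))"
      by (rule order_tendstoD) simp
    have ev2: "\<forall>\<^sub>F l in sequentially. \<forall>k\<in>A0. \<kappa> 0 / 2 < \<kappa> (- (norm (\<rho> l k - rmic m0) / c))"
    proof (rule eventually_ball_finite[OF finA0], rule ballI)
      fix k assume k: "k \<in> A0"
      have "(\<lambda>l. \<rho> l k - rmic m0) \<longlonglongrightarrow> 0" using \<rho>lim[of k] k
        by (auto simp: A0_def intro: LIM_zero)
      then have "(\<lambda>l. - (norm (\<rho> l k - rmic m0) / c)) \<longlonglongrightarrow> - (norm (0::real^3) / c)"
        by (intro tendsto_intros) (simp_all add: cne)
      then have "(\<lambda>l. \<kappa> (- (norm (\<rho> l k - rmic m0) / c))) \<longlonglongrightarrow> \<kappa> 0"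
        using isCont_tendsto_compose[OF kc] by fastforce
      then show "\<forall>\<^sub>F l in sequentially. \<kappa> 0 / 2 < \<kappa> (- (norm (\<rho> l k - rmic m0) / c))"
        by (rule order_tendstoD) (use kap0 in simp)
    qed
    define Bd where "Bd = (U - (L0 - 1)) * (8 * pi) / \<kappa> 0"
    have "\<forall>\<^sub>F l in sequentially. norm (\<beta> l k0) \<le> Bd"
      using ev1 ev2
    proof eventually_elim
      case (elim l)
      have split: "\<Gamma> l = (\<Sum>k\<in>A0. \<alpha> l k * g m0 0 (\<rho> l k)) + (\<Sum>k\<in>S-A0. \<alpha> l k * g m0 0 (\<rho> l k))"
      proof -
        have "A0 \<subseteq> S" by (auto simp: A0_def)
        from sum.subset_diff[OF this finS, of "\<lambda>k. \<alpha> l k * g m0 0 (\<rho> l k)"]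
        show ?thesis unfolding \<Gamma>_def Gm_eq by linarith
      qed
      have termeq: "\<And>k. k \<in> A0 \<Longrightarrow> \<alpha> l k * g m0 0 (\<rho> l k) = \<beta> l k * \<kappa> (- (norm (\<rho> l k - rmic m0) / c)) / (4 * pi)"
      proof -
        fix k assume k: "k \<in> A0"
        have "norm (\<rho> l k - rs k) > 0" using dpos k A0A by auto
        then show "\<alpha> l k * g m0 0 (\<rho> l k) = \<beta> l k * \<kappa> (- (norm (\<rho> l k - rmic m0) / c)) / (4 * pi)"
          using k by (simp add: g_def gamma_def \<beta>_def A0_def field_simps)
      qed
      have tnn: "\<And>k. k \<in> A0 \<Longrightarrow> 0 \<le> \<alpha> l k * g m0 0 (\<rho> l k)"
      proof -
        fix k assume k: "k \<in> A0"
        have b: "0 \<le> \<beta> l k" using \<beta>nn A0A k by auto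
        have "\<kappa> 0 / 2 < \<kappa> (- (norm (\<rho> l k - rmic m0) / c))" using elim(2) k by auto
        then have kk: "0 \<le> \<kappa> (- (norm (\<rho> l k - rmic m0) / c))" using kap0 by linarith
        show "0 \<le> \<alpha> l k * g m0 0 (\<rho> l k)" unfolding termeq[OF k]
          by (intro divide_nonneg_pos mult_nonneg_nonneg b kk) simp
      qed
      have "\<beta> l k0 * (\<kappa> 0 / 2) / (4 * pi) \<le> \<beta> l k0 * \<kappa> (- (norm (\<rho> l k0 - rmic m0) / c)) / (4 * pi)"
        using elim(2) k0A0 \<beta>nn[OF k0A] by (intro divide_right_mono mult_left_mono) auto
      also have "\<dots> = \<alpha> l k0 * g m0 0 (\<rho> l k0)" using termeq[OF k0A0] by simp
      also have "\<dots> \<le> (\<Sum>k\<in>A0. \<alpha> l k * g m0 0 (\<rho> l k))"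
        by (rule member_le_sum[OF k0A0]) (use tnn finA0 in auto)
      also have "\<dots> \<le> U - (L0 - 1)" using split \<Gamma>U[of l] elim(1) by linarith
      finally have "\<beta> l k0 * (\<kappa> 0 / 2) / (4 * pi) \<le> U - (L0 - 1)" .
      then have "\<beta> l k0 \<le> Bd" unfolding Bd_def using kap0 by (simp add: field_simps)
      then show ?case using \<beta>nn[OF k0A] by simp
    qed
    then show "\<exists>Bd. \<forall>\<^sub>F l in sequentially. norm (\<beta> l k0) \<le> Bd" by blast
  qed
  have finA: "finite A" using finS by (simp add: A_def)
  obtain \<sigma>3 bs where s3: "strict_mono \<sigma>3" and bs: "\<forall>k\<in>A. (\<lambda>l. \<beta> (\<sigma>3 l) k) \<longlonglongrightarrow> bs k"
    using multi_subseq[OF finA, of \<beta>] \<beta>bd by blast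
  define \<alpha>' where "\<alpha>' l = \<alpha> (\<sigma>3 l)" for l
  define \<rho>' where "\<rho>' l = \<rho> (\<sigma>3 l)" for l
  have \<alpha>'lim: "\<And>k. k \<in> S \<Longrightarrow> (\<lambda>l. \<alpha>' l k) \<longlonglongrightarrow> as k"
    unfolding \<alpha>'_def using LIMSEQ_subseq_LIMSEQ[OF \<alpha>lim s3] by (simp add: o_def)
  have \<rho>'lim: "\<And>k. k \<in> S \<Longrightarrow> (\<lambda>l. \<rho>' l k) \<longlonglongrightarrow> rs k"
    unfolding \<rho>'_def using LIMSEQ_subseq_LIMSEQ[OF \<rho>lim s3] by (simp add: o_def)
  have T'lim: "(\<lambda>l. Tf (\<alpha>' l) (\<rho>' l)) \<longlonglongrightarrow> I"
    unfolding \<alpha>'_def \<rho>'_def using LIMSEQ_subseq_LIMSEQ[OF T\<alpha>lim s3] by (simp add: o_def)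
  have Adm': "\<And>l. Adm (\<alpha>' l) (\<rho>' l)" by (simp add: \<alpha>'_def \<rho>'_def Adm\<alpha>)
  have bsnn: "\<And>k. k \<in> A \<Longrightarrow> 0 \<le> bs k"
    using bs \<beta>nn by (intro LIMSEQ_le_const[of "\<lambda>l. \<beta> (\<sigma>3 l) _"]) auto
  have \<alpha>'eq: "\<And>l k. k \<in> A \<Longrightarrow> \<alpha>' l k = \<beta> (\<sigma>3 l) k * norm (\<rho>' l k - rs k)"
    using dpos by (simp add: \<beta>_def \<alpha>'_def \<rho>'_def)
  have as0: "\<And>k. k \<in> A \<Longrightarrow> as k = 0"
  proof -
    fix k assume k: "k \<in> A"
    then have kS: "k \<in> S" by (simp add: A_def)
    have "(\<lambda>l. \<beta> (\<sigma>3 l) k * norm (\<rho>' l k - rs k)) \<longlonglongrightarrow> bs k * norm (rs k - rs k)"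
      using bs k \<rho>'lim[OF kS] by (intro tendsto_intros) auto
    then have "(\<lambda>l. \<alpha>' l k) \<longlonglongrightarrow> 0" using \<alpha>'eq[OF k] by simp
    then show "as k = 0" using LIMSEQ_unique \<alpha>'lim[OF kS] by blast
  qed
  define atl where "atl m = (\<Sum>k\<in>A. if rs k = rmic m then bs k / (4 * pi) else 0)" for m
  define lt where "lt m n k = (if k \<in> A then (if rs k = rmic m then bs k * \<kappa> (real n / fs) / (4 * pi) else 0)
      else as k * g m n (rs k))" for m n k
  have termlim: "\<And>m n k. m \<in> {1..M} \<Longrightarrow> k \<in> S \<Longrightarrow> (\<lambda>l. \<alpha>' l k * g m n (\<rho>' l k)) \<longlonglongrightarrow> lt m n k"
  proof -
    fix m n k assume m: "m \<in> {1..M}" and kS: "k \<in> S"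
    show "(\<lambda>l. \<alpha>' l k * g m n (\<rho>' l k)) \<longlonglongrightarrow> lt m n k"
    proof (cases "k \<in> A")
      case False
      then have "rs k \<noteq> rmic m" using kS m by (auto simp: A_def EM_def)
      then have "(\<lambda>l. g m n (\<rho>' l k)) \<longlonglongrightarrow> g m n (rs k)"
        unfolding g_def by (intro gamma_tendsto[OF kc \<rho>'lim[OF kS] _ cne])
      then show ?thesis using False \<alpha>'lim[OF kS] by (simp add: lt_def tendsto_mult)
    next
      case True
      show ?thesis
      proof (cases "rs k = rmic m")
        case False
        then have "(\<lambda>l. g m n (\<rho>' l k)) \<longlonglongrightarrow> g m n (rs k)"
          unfolding g_def by (intro gamma_tendsto[OF kc \<rho>'lim[OF kS] _ cne])
        from tendsto_mult[OF \<alpha>'lim[OF kS] this] show ?thesis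
          using False True as0[OF True] by (simp add: lt_def)
      next
        case eq: True
        have feq: "(\<lambda>l. \<alpha>' l k * g m n (\<rho>' l k)) =
            (\<lambda>l. \<beta> (\<sigma>3 l) k * \<kappa> (real n / fs - norm (\<rho>' l k - rs k) / c) / (4 * pi))"
        proof
          fix l
          have "norm (\<rho>' l k - rs k) > 0" using dpos True by (simp add: \<rho>'_def)
          then show "\<alpha>' l k * g m n (\<rho>' l k) = \<beta> (\<sigma>3 l) k * \<kappa> (real n / fs - norm (\<rho>' l k - rs k) / c) / (4 * pi)"
            using eq by (simp add: \<alpha>'eq[OF True] g_def gamma_def field_simps)
        qed
        have "(\<lambda>l. real n / fs - norm (\<rho>' l k - rs k) / c) \<longlonglongrightarrow> real n / fs - norm (rs k - rs k) / c"
          using \<rho>'lim[OF kS] by (intro tendsto_intros) (simp_all add: cne)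
        then have "(\<lambda>l. \<kappa> (real n / fs - norm (\<rho>' l k - rs k) / c)) \<longlonglongrightarrow> \<kappa> (real n / fs)"
          using isCont_tendsto_compose[OF kc] by fastforce
        then have "(\<lambda>l. \<beta> (\<sigma>3 l) k * \<kappa> (real n / fs - norm (\<rho>' l k - rs k) / c) / (4 * pi))
            \<longlonglongrightarrow> bs k * \<kappa> (real n / fs) / (4 * pi)"
          using bs True by (intro tendsto_intros) auto
        then show ?thesis unfolding feq using True eq by (simp add: lt_def)
      qed
    qed
  qed
  have Gmlim: "\<And>m n. m \<in> {1..M} \<Longrightarrow> (\<lambda>l. Gm (\<alpha>' l) (\<rho>' l) m n) \<longlonglongrightarrow>
      (\<Sum>k\<in>B. as k * g m n (rs k)) + atl m * \<kappa> (real n / fs)"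
  proof -
    fix m n assume m: "m \<in> {1..M}"
    have "(\<lambda>l. Gm (\<alpha>' l) (\<rho>' l) m n) \<longlonglongrightarrow> (\<Sum>k\<in>S. lt m n k)"
      unfolding Gm_eq by (intro tendsto_sum termlim m)
    moreover have "(\<Sum>k\<in>S. lt m n k) = (\<Sum>k\<in>B. as k * g m n (rs k)) + atl m * \<kappa> (real n / fs)"
    proof -
      have "(\<Sum>k\<in>S. lt m n k) = (\<Sum>k\<in>B. lt m n k) + (\<Sum>k\<in>A. lt m n k)"
        using sum.subset_diff[of A S] finS by (simp add: B_def A_def)
      also have "(\<Sum>k\<in>B. lt m n k) = (\<Sum>k\<in>B. as k * g m n (rs k))"
        by (rule sum.cong) (auto simp: lt_def B_def)
      also have "(\<Sum>k\<in>A. lt m n k) = atl m * \<kappa> (real n / fs)"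
        unfolding atl_def sum_distrib_right by (rule sum.cong) (auto simp: lt_def)
      finally show ?thesis .
    qed
    ultimately show "(\<lambda>l. Gm (\<alpha>' l) (\<rho>' l) m n) \<longlonglongrightarrow>
      (\<Sum>k\<in>B. as k * g m n (rs k)) + atl m * \<kappa> (real n / fs)" by simp
  qed
  define Tinf where "Tinf = (1/2) * (\<Sum>m=1..M. \<Sum>n=0..<N. (x m n - ((\<Sum>k\<in>B. as k * g m n (rs k)) + atl m * \<kappa> (real n / fs)))\<^sup>2)"
  have "(\<lambda>l. Tf (\<alpha>' l) (\<rho>' l)) \<longlonglongrightarrow> Tinf"
    unfolding Tf_eq Tinf_def by (intro tendsto_intros tendsto_sum Gmlim) auto
  then have ITinf: "I = Tinf" using T'lim LIMSEQ_unique by blast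
  define K' where "K' = card B"
  have BS: "B \<subseteq> S" and AS: "A \<subseteq> S" by (auto simp: B_def A_def)
  have finB: "finite B" using finS BS finite_subset by blast
  have SAB: "S = B \<union> A" "B \<inter> A = {}" using AS by (auto simp: B_def)
  have cardS: "card S = K" by (simp add: S_def)
  have cardAB: "card A + K' = K" unfolding K'_def using card_Un_disjoint[OF finB finA SAB(2)] SAB(1) cardS by simp
  have K'K: "K' \<le> K" using cardAB by simp
  obtain h1 where h1: "bij_betw h1 {1..K'} B"
    using finite_same_card_bij[of "{1..K'}" B] finB by (auto simp: K'_def)
  obtain h2 where h2: "bij_betw h2 {K'+1..K} A"
    using finite_same_card_bij[of "{K'+1..K}" A] finA cardAB by auto
  define \<pi> where "\<pi> k = (if k \<le> K' then h1 k else h2 k)" for k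
  have \<pi>1: "\<And>k. k \<in> {1..K'} \<Longrightarrow> \<pi> k = h1 k \<and> h1 k \<in> B"
  proof -
    fix k assume k: "k \<in> {1..K'}"
    then have "\<pi> k = h1 k" by (simp add: \<pi>_def)
    moreover have "h1 k \<in> B" using bij_betwE[OF h1] k by blast
    ultimately show "\<pi> k = h1 k \<and> h1 k \<in> B" by simp
  qed
  have \<pi>2: "\<And>k. k \<in> {K'+1..K} \<Longrightarrow> \<pi> k = h2 k \<and> h2 k \<in> A"
  proof -
    fix k assume k: "k \<in> {K'+1..K}"
    then have "\<pi> k = h2 k" by (simp add: \<pi>_def)
    moreover have "h2 k \<in> A" using bij_betwE[OF h2] k by blast
    ultimately show "\<pi> k = h2 k \<and> h2 k \<in> A" by simp
  qed
  have \<pi>S: "\<And>k. k \<in> S \<Longrightarrow> \<pi> k \<in> S"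
  proof -
    fix k assume "k \<in> S"
    then have "k \<in> {1..K'} \<or> k \<in> {K'+1..K}" by (auto simp: S_def)
    then show "\<pi> k \<in> S"
    proof
      assume "k \<in> {1..K'}" then show ?thesis using \<pi>1[of k] BS by auto
    next
      assume "k \<in> {K'+1..K}" then show ?thesis using \<pi>2[of k] AS by auto
    qed
  qed
  have sumB: "\<And>f :: nat \<Rightarrow> real. (\<Sum>k=1..K'. f (\<pi> k)) = (\<Sum>k\<in>B. f k)"
  proof -
    fix f :: "nat \<Rightarrow> real"
    have "(\<Sum>k=1..K'. f (\<pi> k)) = (\<Sum>k=1..K'. f (h1 k))" using \<pi>1 by (intro sum.cong) auto
    also have "\<dots> = (\<Sum>k\<in>B. f k)" by (rule sum.reindex_bij_betw[OF h1])
    finally show "(\<Sum>k=1..K'. f (\<pi> k)) = (\<Sum>k\<in>B. f k)" .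
  qed
  have sumS: "\<And>f :: nat \<Rightarrow> real. (\<Sum>k\<in>S. f (\<pi> k)) = (\<Sum>k\<in>S. f k)"
  proof -
    fix f :: "nat \<Rightarrow> real"
    have SS: "S = {1..K'} \<union> {K'+1..K}" using K'K by (auto simp: S_def)
    have "(\<Sum>k\<in>S. f (\<pi> k)) = (\<Sum>k=1..K'. f (\<pi> k)) + (\<Sum>k=K'+1..K. f (\<pi> k))"
      unfolding SS by (rule sum.union_disjoint) auto
    also have "(\<Sum>k=K'+1..K. f (\<pi> k)) = (\<Sum>k=K'+1..K. f (h2 k))" using \<pi>2 by (intro sum.cong) auto
    also have "\<dots> = (\<Sum>k\<in>A. f k)" by (rule sum.reindex_bij_betw[OF h2])
    also have "(\<Sum>k\<in>S. f k) = (\<Sum>k\<in>B. f k) + (\<Sum>k\<in>A. f k)"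
      unfolding SAB(1) by (rule sum.union_disjoint[OF finB finA SAB(2)])
    ultimately show "(\<Sum>k\<in>S. f (\<pi> k)) = (\<Sum>k\<in>S. f k)" using sumB by simp
  qed
  have \<alpha>'nn: "\<And>l k. k \<in> S \<Longrightarrow> 0 \<le> \<alpha>' l k" using Adm' by (simp add: Adm_iff)
  have \<rho>'Cs: "\<And>l k. k \<in> S \<Longrightarrow> \<rho>' l k \<in> Cs" using Adm' by (simp add: Adm_iff)
  have asnn: "\<And>k. k \<in> S \<Longrightarrow> 0 \<le> as k"
    using \<alpha>'lim \<alpha>'nn by (intro LIMSEQ_le_const[of "\<lambda>l. \<alpha>' l _"]) auto
  define a where "a k = as (\<pi> k)" for k
  define r where "r k = rs (\<pi> k)" for k
  define al where "al l k = \<alpha>' l (\<pi> k)" for l k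
  define rl where "rl l k = \<rho>' l (\<pi> k)" for l k
  have GmEq: "\<And>l m n. Gm (al l) (rl l) m n = Gm (\<alpha>' l) (\<rho>' l) m n"
    unfolding Gm_eq al_def rl_def by (rule sumS)
  have TfEq: "\<And>l. Tf (al l) (rl l) = Tf (\<alpha>' l) (\<rho>' l)"
    unfolding Tf_eq GmEq ..
  have goal1: "\<forall>k\<in>{1..K'}. 0 \<le> a k \<and> r k \<notin> EM M rmic"
    using \<pi>1 asnn BS by (auto simp: a_def r_def B_def A_def)
  have goal2: "\<forall>m\<in>{1..M}. 0 \<le> atl m"
    unfolding atl_def using bsnn by (auto intro!: sum_nonneg)
  have goal3: "I = Ttilde c fs \<kappa> rmic M N x K' a r atl"
    unfolding ITinf Tinf_def Ttilde_def a_def r_def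
    using sumB[of "\<lambda>k. as k * gamma c fs \<kappa> rmic _ _ (rs k)"]
    by (simp add: g_def algebra_simps)
  have goal4: "\<forall>l. Adm (al l) (rl l)"
    unfolding Adm_iff al_def rl_def using \<pi>S \<alpha>'nn \<rho>'Cs by blast
  have goal5: "(\<lambda>l. Tf (al l) (rl l)) \<longlonglongrightarrow> I" unfolding TfEq by (rule T'lim)
  have goal6: "\<forall>k\<in>{1..K'}. (\<lambda>l. al l k) \<longlonglongrightarrow> a k \<and> (\<lambda>l. rl l k) \<longlonglongrightarrow> r k"
  proof
    fix k assume k: "k \<in> {1..K'}"
    then have "\<pi> k \<in> S" using \<pi>1[OF k] BS by auto
    then show "(\<lambda>l. al l k) \<longlonglongrightarrow> a k \<and> (\<lambda>l. rl l k) \<longlonglongrightarrow> r k"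
      unfolding al_def rl_def a_def r_def using \<alpha>'lim \<rho>'lim by blast
  qed
  have goal7: "\<forall>k\<in>{K'+1..K}. (\<lambda>l. al l k) \<longlonglongrightarrow> 0"
  proof
    fix k assume "k \<in> {K'+1..K}"
    then have "\<pi> k \<in> A" using \<pi>2 by auto
    then show "(\<lambda>l. al l k) \<longlonglongrightarrow> 0" using \<alpha>'lim[of "\<pi> k"] as0 AS by (auto simp: al_def)
  qed
  show ?thesis
    using K'K goal1 goal2 goal3 goal4 goal5 goal6 goal7
    unfolding I_def Adm_def Tf_def by blast
qed

end
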